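(* Let $k\ge2$ be an integer and $\Delta=2^k$, and consider the instance $\overline{\mathcal I}$ described below. Then for every $i\in[k]$, every agent in group $G_i$ has weighted maximin share exactly $w_i$. Instance $\overline{\mathcal I}$: agents are partitioned into groups $G_1,\dots,G_k$ with $|G_i|=n_i=\Delta^{i-1}$; all agents in $G_i$ have weight $w_i$ and the same cost function $v_i$, where $w_1=1$ and $w_i=2^{i-2}/n_i$ for $i\ge2$. Items are partitioned into $\mathcal M_1,\dots,\mathcal M_k$ with $|\mathcal M_1|=m_1=1$ and $|\mathcal M_i|=m_i=\tfrac32 n_i$ for $i\ge2$; for $i\ge2$, $\mathcal M_i=\mathcal M_i^1\cup\mathcal M_i^2$ with $|\mathcal M_i^1|=n_i/2$, $|\mathcal M_i^2|=n_i$; $T_i\subseteq\mathcal M_i^1$ is any subset with $|T_i|=n_i/2-(m_1+\cdots+m_{i-1})$, $T_i'=\mathcal M_i^1\setminus T_i$, and $B_i=\mathcal M_1\cup\cdots\cup\mathcal M_{i-1}\cup T_i$. Costs: $v_1(e)=1$ for the unique $e\in\mathcal M_1$; for $1\le j<i$ (with $i\ge 2$), $v_j(e)=w_i$ for $e\in\mathcal M_i^1$ and $v_j(e)=w_i/2$ for $e\in\mathcal M_i^2$; for $i\ge2$, $v_i(e)=2w_i$ for $e\in B_i$, $v_i(e)=0$ for $e\in T_i'$, and $v_i(e)=w_i$ for $e\in\mathcal M_i^2$. All cost functions are additive.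
   Context: For a chore-allocation instance with agents $\mathcal N$, items $\mathcal M$, positive weights $w_a$ and additive costs $v_a$, an allocation is an ordered partition of $\mathcal M$ into one (possibly empty) bundle per agent, and the weighted maximin share of agent $a$ is $\mathsf{WMMS}_a=w_a\cdot\min_{\text{allocations }(B_b)_{b\in\mathcal N}}\max_{b\in\mathcal N}\frac{v_a(B_b)}{w_b}$. (Weights need not be normalized.) One checks that $m_1+\cdots+m_{i-1}\le n_i/2$ so $T_i$ is well defined. *)

theory Defs
  imports Main "HOL-Library.Disjoint_Sets" Complex_Main
begin

definition is_allocation :: "'ag set \<Rightarrow> 'it set \<Rightarrow> ('ag \<Rightarrow> 'it set) \<Rightarrow> bool" where
  "is_allocation N M A \<longleftrightarrow>
     (\<forall>b\<in>N. A b \<subseteq> M) \<and>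
     (\<forall>b\<in>N. \<forall>b'\<in>N. b \<noteq> b' \<longrightarrow> A b \<inter> A b' = {}) \<and>
     (\<Union>b\<in>N. A b) = M \<and>
     (\<forall>b. b \<notin> N \<longrightarrow> A b = {})"

definition wmms :: "'ag set \<Rightarrow> 'it set \<Rightarrow> ('ag \<Rightarrow> real) \<Rightarrow> ('ag \<Rightarrow> 'it \<Rightarrow> real) \<Rightarrow> 'ag \<Rightarrow> real" where
  "wmms N M w c a = w a * Min ((\<lambda>A. Max ((\<lambda>b. (\<Sum>e\<in>A b. c a e) / w b) ` N))
                                  ` {A. is_allocation N M A})"

definition inst_n :: "nat \<Rightarrow> nat \<Rightarrow> nat" where
  "inst_n k i = (2 ^ k) ^ (i - 1)"

definition inst_w :: "nat \<Rightarrow> nat \<Rightarrow> real" where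
  "inst_w k i = (if i = 1 then 1 else 2 ^ (i - 2) / real (inst_n k i))"

definition inst_m :: "nat \<Rightarrow> nat \<Rightarrow> nat" where
  "inst_m k i = (if i = 1 then 1 else 3 * inst_n k i div 2)"

end

theory Submission
  imports Defs
begin


lemma part_card:
  assumes "finite S" "finite X" "card X = (\<Sum>b\<in>S. q b)"
  shows "\<exists>P. (\<forall>b\<in>S. P b \<subseteq> X \<and> card (P b) = q b) \<and>
             (\<forall>b\<in>S. \<forall>b'\<in>S. b \<noteq> b' \<longrightarrow> P b \<inter> P b' = {}) \<and> (\<Union>b\<in>S. P b) = X"
  using assms
proof (induction S arbitrary: X rule: finite_induct)
  case empty
  then show ?case by auto
next
  case (insert b S)
  then have cX: "card X = q b + (\<Sum>b\<in>S. q b)" by simp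
  then obtain Y where Y: "Y \<subseteq> X" "card Y = q b"
    using obtain_subset_with_card_n[of "q b" X] by (metis le_add1)
  have fin: "finite (X - Y)" using insert by simp
  have "card (X - Y) = (\<Sum>b\<in>S. q b)"
    using Y cX insert(4) by (simp add: card_Diff_subset finite_subset)
  from insert.IH[OF fin this] obtain P where P:
    "\<forall>b\<in>S. P b \<subseteq> X - Y \<and> card (P b) = q b"
    "\<forall>b\<in>S. \<forall>b'\<in>S. b \<noteq> b' \<longrightarrow> P b \<inter> P b' = {}" "(\<Union>b\<in>S. P b) = X - Y" by blast
  show ?case
    apply (rule exI[of _ "P(b := Y)"])
    using P Y insert(2) by auto
qed

definition good :: "('it \<Rightarrow> real) \<Rightarrow> ('ag \<Rightarrow> real) \<Rightarrow> 'ag set \<Rightarrow> 'it set \<Rightarrow> bool" where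
  "good v w N X \<longleftrightarrow> (\<exists>A. is_allocation N X A \<and> (\<forall>b\<in>N. sum v (A b) \<le> w b))"

lemma good_split:
  assumes "finite S" "finite X" "card X = (\<Sum>b\<in>S. q b)"
    and "\<forall>b\<in>S. w b \<ge> 0" and "\<forall>b\<in>S. \<forall>e\<in>X. real (q b) * v e \<le> w b"
  shows "good v w S X"
proof -
  obtain P where P: "\<forall>b\<in>S. P b \<subseteq> X \<and> card (P b) = q b"
    "\<forall>b\<in>S. \<forall>b'\<in>S. b \<noteq> b' \<longrightarrow> P b \<inter> P b' = {}" "(\<Union>b\<in>S. P b) = X"
    using part_card[OF assms(1-3)] by blast
  define A where "A b = (if b \<in> S then P b else {})" for b
  have al: "is_allocation S X A" unfolding is_allocation_def A_def using P by auto
  have "sum v (A b) \<le> w b" if b: "b \<in> S" for b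
  proof (cases "q b = 0")
    case True
    have "finite (P b)" using P b assms(2) finite_subset by blast
    then have "P b = {}" using P b True by (metis card_0_eq)
    then show ?thesis using b assms(4) A_def by simp
  next
    case False
    have fin: "finite (P b)" using P b assms(2) finite_subset by blast
    have "real (q b) * sum v (P b) = (\<Sum>e\<in>P b. real (q b) * v e)" by (simp add: sum_distrib_left)
    also have "\<dots> \<le> (\<Sum>e\<in>P b. w b)" apply (rule sum_mono) using assms(5) P b by blast
    also have "\<dots> = real (q b) * w b" using P b by simp
    finally have "real (q b) * sum v (P b) \<le> real (q b) * w b" .
    then have "sum v (P b) \<le> w b" using False by simp
    then show ?thesis using b A_def by simp
  qed
  then show ?thesis unfolding good_def using al by blast
qed

lemma good_Un:
  assumes "good v w N1 X1" "good v w N2 X2" "N1 \<inter> N2 = {}" "X1 \<inter> X2 = {}"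
  shows "good v w (N1 \<union> N2) (X1 \<union> X2)"
proof -
  obtain A1 where A1: "is_allocation N1 X1 A1" "\<forall>b\<in>N1. sum v (A1 b) \<le> w b"
    using assms(1) unfolding good_def by blast
  obtain A2 where A2: "is_allocation N2 X2 A2" "\<forall>b\<in>N2. sum v (A2 b) \<le> w b"
    using assms(2) unfolding good_def by blast
  have s1: "\<forall>b. A1 b \<subseteq> X1" and s2: "\<forall>b. A2 b \<subseteq> X2"
    using A1(1) A2(1) unfolding is_allocation_def by (metis empty_subsetI)+
  have e1: "\<forall>b. b \<notin> N1 \<longrightarrow> A1 b = {}" and e2: "\<forall>b. b \<notin> N2 \<longrightarrow> A2 b = {}"
    using A1(1) A2(1) unfolding is_allocation_def by blast+
  have d1: "\<forall>b\<in>N1. \<forall>b'\<in>N1. b \<noteq> b' \<longrightarrow> A1 b \<inter> A1 b' = {}"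
    and d2: "\<forall>b\<in>N2. \<forall>b'\<in>N2. b \<noteq> b' \<longrightarrow> A2 b \<inter> A2 b' = {}"
    using A1(1) A2(1) unfolding is_allocation_def by blast+
  have u1: "(\<Union>b\<in>N1. A1 b) = X1" and u2: "(\<Union>b\<in>N2. A2 b) = X2"
    using A1(1) A2(1) unfolding is_allocation_def by blast+
  have x12: "\<forall>b b'. A1 b \<inter> A2 b' = {}" using s1 s2 assms(4) by blast
  have dd: "(A1 b \<union> A2 b) \<inter> (A1 b' \<union> A2 b') = {}" if "b \<in> N1 \<union> N2" "b' \<in> N1 \<union> N2" "b \<noteq> b'" for b b'
  proof -
    have "A1 b \<inter> A1 b' = {}"
    proof (cases "b \<in> N1 \<and> b' \<in> N1")
      case True then show ?thesis using d1 that by blast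
    next
      case False then show ?thesis using e1 by auto
    qed
    moreover have "A2 b \<inter> A2 b' = {}"
    proof (cases "b \<in> N2 \<and> b' \<in> N2")
      case True then show ?thesis using d2 that by blast
    next
      case False then show ?thesis using e2 by auto
    qed
    ultimately show ?thesis using x12 by (simp add: Int_Un_distrib Int_Un_distrib2 Int_commute)
  qed
  have "(\<Union>b\<in>N1 \<union> N2. A1 b \<union> A2 b) = X1 \<union> X2"
  proof -
    have "(\<Union>b\<in>N1 \<union> N2. A1 b) = X1" using u1 e1 by auto
    moreover have "(\<Union>b\<in>N1 \<union> N2. A2 b) = X2" using u2 e2 by auto
    ultimately show ?thesis by auto
  qed
  then have "is_allocation (N1 \<union> N2) (X1 \<union> X2) (\<lambda>b. A1 b \<union> A2 b)"
    unfolding is_allocation_def using s1 s2 dd e1 e2 by blast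
  moreover have "\<forall>b\<in>N1 \<union> N2. sum v (A1 b \<union> A2 b) \<le> w b"
  proof
    fix b assume "b \<in> N1 \<union> N2"
    then show "sum v (A1 b \<union> A2 b) \<le> w b"
    proof
      assume b: "b \<in> N1"
      then have "A2 b = {}" using A2(1) assms(3) unfolding is_allocation_def by blast
      then show ?thesis using A1(2) b by simp
    next
      assume b: "b \<in> N2"
      then have "A1 b = {}" using A1(1) assms(3) unfolding is_allocation_def by blast
      then show ?thesis using A2(2) b by simp
    qed
  qed
  ultimately show ?thesis unfolding good_def by blast
qed

lemma good_empty: "good v w {} {}"
  unfolding good_def is_allocation_def by (rule exI[of _ "\<lambda>_. {}"]) auto

lemma good_UN:
  assumes "finite J" "disjoint_family_on NS J" "disjoint_family_on XS J"
    "\<forall>j\<in>J. good v w (NS j) (XS j)"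
  shows "good v w (\<Union>j\<in>J. NS j) (\<Union>j\<in>J. XS j)"
  using assms
proof (induction J rule: finite_induct)
  case empty
  then show ?case using good_empty by simp
next
  case (insert j J)
  have d1: "disjoint_family_on NS J" "disjoint_family_on XS J"
    using insert(4,5) by (auto simp: disjoint_family_on_def)
  have IH: "good v w (\<Union>j\<in>J. NS j) (\<Union>j\<in>J. XS j)" using insert d1 by simp
  have "NS j \<inter> (\<Union>j\<in>J. NS j) = {}"
    using insert(2,4) unfolding disjoint_family_on_def by fastforce
  moreover have "XS j \<inter> (\<Union>j\<in>J. XS j) = {}"
    using insert(2,5) unfolding disjoint_family_on_def by fastforce
  ultimately show ?case using good_Un[OF _ IH] insert(6) by simp
qed

lemma good_zero:
  assumes "good v w N X" "finite X" "a \<in> N" "finite Y" "X \<inter> Y = {}" "\<forall>e\<in>Y. v e = 0"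
  shows "good v w N (X \<union> Y)"
proof -
  obtain A where A: "is_allocation N X A" "\<forall>b\<in>N. sum v (A b) \<le> w b"
    using assms(1) unfolding good_def by blast
  define A' where "A' = A(a := A a \<union> Y)"
  have "is_allocation N (X \<union> Y) A'"
    using A(1) assms(3,5) unfolding is_allocation_def A'_def
    apply (intro conjI)
       apply auto[1]
      apply (simp add: Int_Un_distrib Int_Un_distrib2; blast)
     apply auto[1]
    apply auto
    done
  moreover have "\<forall>b\<in>N. sum v (A' b) \<le> w b"
  proof
    fix b assume b: "b \<in> N"
    show "sum v (A' b) \<le> w b"
    proof (cases "b = a")
      case True
      have "finite (A a)" using A(1) assms(2,3) unfolding is_allocation_def by (meson finite_subset)
      moreover have "A a \<inter> Y = {}" using A(1) assms(3,5) unfolding is_allocation_def by blast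
      ultimately have "sum v (A a \<union> Y) = sum v (A a) + sum v Y"
        using assms(4) by (simp add: sum.union_disjoint)
      then show ?thesis using True A(2) b assms(6) A'_def by simp
    next
      case False
      then show ?thesis using A(2) b A'_def by simp
    qed
  qed
  ultimately show ?thesis unfolding good_def by blast
qed

lemma alloc_finite:
  assumes "finite N" "finite M"
  shows "finite {A. is_allocation N M A}"
proof -
  have "inj_on (\<lambda>A. restrict A N) {A. is_allocation N M A}"
  proof (rule inj_onI)
    fix A B assume A: "A \<in> {A. is_allocation N M A}" and B: "B \<in> {A. is_allocation N M A}"
      and eq: "restrict A N = restrict B N"
    show "A = B"
    proof
      fix x show "A x = B x"
      proof (cases "x \<in> N")
        case True then show ?thesis using fun_cong[OF eq, of x] by simp
      next
        case False then show ?thesis using A B unfolding is_allocation_def by simp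
      qed
    qed
  qed
  moreover have "(\<lambda>A. restrict A N) ` {A. is_allocation N M A} \<subseteq> PiE N (\<lambda>_. Pow M)"
    unfolding is_allocation_def by auto
  moreover have "finite (PiE N (\<lambda>_. Pow M))" using assms by (simp add: finite_PiE)
  ultimately show ?thesis by (meson finite_imageD finite_subset)
qed

lemma alloc_sum:
  assumes "is_allocation N M A" "finite M" "finite N"
  shows "sum v M = (\<Sum>b\<in>N. sum v (A b))"
proof -
  have M: "M = (\<Union>b\<in>N. A b)" using assms(1) unfolding is_allocation_def by simp
  have "\<forall>b\<in>N. finite (A b)" using assms(1,2) unfolding is_allocation_def by (meson finite_subset)
  moreover have "\<forall>b\<in>N. \<forall>b'\<in>N. b \<noteq> b' \<longrightarrow> A b \<inter> A b' = {}" using assms(1) unfolding is_allocation_def by simp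
  ultimately show ?thesis unfolding M using assms(3) by (simp add: sum.UNION_disjoint)
qed

lemma wmms_eq:
  assumes "finite N" "finite M" "a \<in> N" "\<forall>b\<in>N. w b > 0" "good (c a) w N M"
    "sum (c a) M \<ge> sum w N"
  shows "wmms N M w c a = w a"
proof -
  let ?f = "\<lambda>A. Max ((\<lambda>b. (\<Sum>e\<in>A b. c a e) / w b) ` N)"
  let ?S = "?f ` {A. is_allocation N M A}"
  have low: "?f A \<ge> 1" if A: "is_allocation N M A" for A
  proof -
    have "\<exists>b\<in>N. sum (c a) (A b) \<ge> w b"
    proof (rule ccontr)
      assume "\<not> ?thesis"
      then have "\<forall>b\<in>N. sum (c a) (A b) < w b" by auto
      then have "(\<Sum>b\<in>N. sum (c a) (A b)) < sum w N"
        using assms(1,3) by (intro sum_strict_mono) auto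
      then show False using alloc_sum[OF A assms(2,1), of "c a"] assms(6) by simp
    qed
    then obtain b where b: "b \<in> N" "sum (c a) (A b) \<ge> w b" by blast
    then have "1 \<le> sum (c a) (A b) / w b" using assms(4) by simp
    also have "\<dots> \<le> ?f A" using b assms(1) by (intro Max_ge) auto
    finally show ?thesis .
  qed
  obtain A where A: "is_allocation N M A" "\<forall>b\<in>N. sum (c a) (A b) \<le> w b"
    using assms(5) unfolding good_def by blast
  have le1: "\<forall>b\<in>N. sum (c a) (A b) / w b \<le> 1"
  proof
    fix b assume b: "b \<in> N"
    then have "w b > 0" "sum (c a) (A b) \<le> w b" using A(2) assms(4) by auto
    then show "sum (c a) (A b) / w b \<le> 1" by simp
  qed
  have "?f A \<le> 1"
    apply (subst Max_le_iff)
    using assms(1,3) le1 by auto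
  with low[OF A(1)] have fA: "?f A = 1" by simp
  have fin: "finite ?S" using alloc_finite[OF assms(1,2)] by simp
  have m1: "1 \<in> ?S" using fA A(1) by (metis (mono_tags, lifting) image_eqI mem_Collect_eq)
  have m2: "\<forall>y\<in>?S. 1 \<le> y" using low by blast
  have "Min ?S = 1"
    apply (rule Min_eqI[OF fin])
    using m1 m2 by auto
  then show ?thesis unfolding wmms_def by simp
qed



lemma w_pos: "inst_w k i > 0"
  unfolding inst_w_def inst_n_def by simp

lemma n_even: "k \<ge> 1 \<Longrightarrow> i \<ge> 2 \<Longrightarrow> even (inst_n k i)"
  unfolding inst_n_def by (simp add: dvd_power)

lemma w_alt:
  assumes "k \<ge> 2" "i \<ge> 2"
  shows "inst_w k i = 1 / (2 * real (2^(k-1)) ^ (i-1))"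
proof -
  obtain i' where i: "i = i' + 2" using assms(2) by (metis add.commute le_Suc_ex)
  obtain k' where k: "k = k' + 1" using assms(1) by (metis add.commute le_Suc_ex le_trans one_le_numeral)
  show ?thesis unfolding inst_w_def inst_n_def i k
    by (simp add: power_mult_distrib field_simps power_add)
qed

lemma nw: "real (inst_n k i) * inst_w k i = (if i = 1 then 1 else 2^(i-2))"
  unfolding inst_w_def inst_n_def by simp

lemma sum_nw: "i \<ge> 2 \<Longrightarrow> (\<Sum>j\<in>{1..<i}. real (inst_n k j) * inst_w k j) = 2^(i-2)"
proof (induction i rule: dec_induct)
  case base
  then show ?case by (simp add: nw)
next
  case (step i)
  have "{1..<Suc i} = insert i {1..<i}" using step by auto
  then show ?case using step by (simp add: nw power_Suc[symmetric] del: power_Suc)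
qed

lemma sum_m: assumes "k \<ge> 2" "i \<ge> 2" shows "(\<Sum>j\<in>{1..<i}. inst_m k j) \<le> inst_n k i div 2"
  using assms(2)
proof (induction i rule: dec_induct)
  case base
  have "(2::nat) \<le> 2^k" using assms(1) by (metis one_le_numeral power_one_right power_increasing le_trans one_le_numeral)
  then show ?case by (simp add: inst_m_def inst_n_def)
next
  case (step i)
  have "{1..<Suc i} = insert i {1..<i}" using step by auto
  then have "(\<Sum>j\<in>{1..<Suc i}. inst_m k j) = inst_m k i + (\<Sum>j\<in>{1..<i}. inst_m k j)" by simp
  also have "\<dots> \<le> 3 * inst_n k i div 2 + inst_n k i div 2" using step by (simp add: inst_m_def)
  also have "\<dots> \<le> 2 * inst_n k i" by simp
  also have "\<dots> \<le> inst_n k (Suc i) div 2"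
  proof -
    have "(4::nat) \<le> 2^k" using assms(1) by (metis power2_eq_square numeral_Bit0 power_increasing one_le_numeral mult_2 numeral_times_numeral semiring_norm(12))
    then have "4 * inst_n k i \<le> 2^k * inst_n k i" by simp
    moreover have "inst_n k (Suc i) = 2^k * inst_n k i" using step unfolding inst_n_def
      by (metis Suc_diff_le diff_Suc_1 le_trans one_le_numeral power_Suc)
    ultimately show ?thesis by linarith
  qed
  finally show ?case .
qed

lemma quota:
  assumes "k \<ge> 2" "1 \<le> j" "j < i"
  shows "\<exists>q::nat. real q * (2 * inst_w k i) = inst_w k j"
proof -
  define h :: nat where "h = 2^(k-1)"
  have hpos: "h > 0" unfolding h_def by simp
  have wi: "inst_w k i = 1 / (2 * real h ^ (i-1))" using w_alt[OF assms(1)] assms h_def by simp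
  show ?thesis
  proof (cases "j = 1")
    case True
    show ?thesis
      apply (rule exI[of _ "h^(i-1)"])
      using True wi hpos by (simp add: inst_w_def)
  next
    case False
    then have wj: "inst_w k j = 1 / (2 * real h ^ (j-1))" using w_alt[OF assms(1)] assms h_def by simp
    have he: "2 * (h div 2) = h" unfolding h_def using assms(1)
      by (metis One_nat_def Suc_1 Suc_le_lessD diff_Suc_1 dvd_mult_div_cancel dvd_power gcd_nat.refl less_diff_conv plus_1_eq_Suc zero_less_diff)
    have h2: "h div 2 > 0" using he hpos by linarith
    have ex: "1 + (i - j - 1) + (j - 1) = i - 1" using assms by simp
    have "2 * ((h div 2) * h^(i-j-1)) * h^(j-1) = h^(i-1)"
      by (metis he ex mult.assoc power_add power_one_right)
    then have e: "2 * real ((h div 2) * h^(i-j-1)) * real h^(j-1) = real h^(i-1)"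
      by (metis of_nat_mult of_nat_numeral of_nat_power)
    show ?thesis
      apply (rule exI[of _ "(h div 2) * h^(i-j-1)"])
      unfolding wi wj using hpos e[symmetric] h2 by (simp add: field_simps)
  qed
qed



lemma sum_split3:
  fixes f :: "nat \<Rightarrow> real" and i k :: nat
  assumes "1 \<le> i" "i \<le> k"
  shows "(\<Sum>j\<in>{1..k}. f j) = (\<Sum>j\<in>{1..<i}. f j) + f i + (\<Sum>j\<in>{Suc i..k}. f j)"
proof -
  have "{1..k} = {1..<i} \<union> {i..k}" using assms by auto
  then have "(\<Sum>j\<in>{1..k}. f j) = (\<Sum>j\<in>{1..<i}. f j) + (\<Sum>j\<in>{i..k}. f j)"
    by (simp add: sum.union_disjoint ivl_disj_int(15))
  also have "(\<Sum>j\<in>{i..k}. f j) = f i + (\<Sum>j\<in>{Suc i..k}. f j)"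
    using assms(2) by (simp add: sum.atLeast_Suc_atMost)
  finally show ?thesis by simp
qed

lemma disj_piece:
  fixes i k :: nat
  assumes "disjoint_family_on G {1..k}" "1 \<le> i"
  shows "disjoint_family_on (\<lambda>t. if t = i then \<Union>j\<in>{1..i}. G j else G t) {i..k}"
  unfolding disjoint_family_on_def
proof (intro ballI impI)
  fix m n assume m: "m \<in> {i..k}" and n: "n \<in> {i..k}" and mn: "m \<noteq> n"
  have D: "\<And>x y. x \<in> {1..k} \<Longrightarrow> y \<in> {1..k} \<Longrightarrow> x \<noteq> y \<Longrightarrow> G x \<inter> G y = {}"
    using assms(1) unfolding disjoint_family_on_def by blast
  show "(if m = i then \<Union>j\<in>{1..i}. G j else G m) \<inter> (if n = i then \<Union>j\<in>{1..i}. G j else G n) = {}"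
  proof (cases "m = i")
    case True
    then have "n \<noteq> i" using mn by simp
    then have "\<forall>j\<in>{1..i}. G j \<inter> G n = {}" using D n assms(2) True m by auto
    then show ?thesis using True \<open>n \<noteq> i\<close> by auto
  next
    case False
    show ?thesis
    proof (cases "n = i")
      case True
      then have "\<forall>j\<in>{1..i}. G m \<inter> G j = {}" using D m n False assms(2) by auto
      then show ?thesis using True False by auto
    next
      case False2: False
      then show ?thesis using D m n mn False assms(2) by auto
    qed
  qed
qed

lemma cover_piece:
  fixes i k :: nat
  assumes "1 \<le> i" "i \<le> k"
  shows "(\<Union>t\<in>{i..k}. if t = i then \<Union>j\<in>{1..i}. G j else G t) = (\<Union>j\<in>{1..k}. G j)"
proof
  show "(\<Union>t\<in>{i..k}. if t = i then \<Union>j\<in>{1..i}. G j else G t) \<subseteq> (\<Union>j\<in>{1..k}. G j)"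
  proof
    fix x assume "x \<in> (\<Union>t\<in>{i..k}. if t = i then \<Union>j\<in>{1..i}. G j else G t)"
    then obtain t where t: "t \<in> {i..k}" "x \<in> (if t = i then \<Union>j\<in>{1..i}. G j else G t)" by blast
    show "x \<in> (\<Union>j\<in>{1..k}. G j)"
    proof (cases "t = i")
      case True
      then obtain j where "j \<in> {1..i}" "x \<in> G j" using t by auto
      then show ?thesis using assms by (intro UN_I[of j]) auto
    next
      case False
      then show ?thesis using t assms by (intro UN_I[of t]) auto
    qed
  qed
  show "(\<Union>j\<in>{1..k}. G j) \<subseteq> (\<Union>t\<in>{i..k}. if t = i then \<Union>j\<in>{1..i}. G j else G t)"
  proof
    fix x assume "x \<in> (\<Union>j\<in>{1..k}. G j)"
    then obtain j where j: "j \<in> {1..k}" "x \<in> G j" by blast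
    show "x \<in> (\<Union>t\<in>{i..k}. if t = i then \<Union>j\<in>{1..i}. G j else G t)"
    proof (cases "j \<le> i")
      case True
      then show ?thesis using j assms by (intro UN_I[of i]) auto
    next
      case False
      then show ?thesis using j assms by (intro UN_I[of j]) auto
    qed
  qed
qed


theorem mainTheorem10:
  fixes k :: nat
    and N :: "'ag set" and G :: "nat \<Rightarrow> 'ag set"
    and M :: "'it set" and Ms M1 M2 T :: "nat \<Rightarrow> 'it set"
    and w :: "'ag \<Rightarrow> real" and c :: "'ag \<Rightarrow> 'it \<Rightarrow> real"
  assumes k2: "k \<ge> 2"
    (* agents *)
    and N_def: "N = (\<Union>i\<in>{1..k}. G i)"
    and G_disj: "disjoint_family_on G {1..k}"
    and G_card: "\<forall>i\<in>{1..k}. finite (G i) \<and> card (G i) = inst_n k i"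
    and w_G: "\<forall>i\<in>{1..k}. \<forall>a\<in>G i. w a = inst_w k i"
    (* items *)
    and M_def: "M = (\<Union>i\<in>{1..k}. Ms i)"
    and Ms_disj: "disjoint_family_on Ms {1..k}"
    and Ms1_card: "finite (Ms 1) \<and> card (Ms 1) = inst_m k 1"
    and Ms_split: "\<forall>i\<in>{2..k}. Ms i = M1 i \<union> M2 i \<and> M1 i \<inter> M2 i = {}"
    and M1_card: "\<forall>i\<in>{2..k}. finite (M1 i) \<and> card (M1 i) = inst_n k i div 2"
    and M2_card: "\<forall>i\<in>{2..k}. finite (M2 i) \<and> card (M2 i) = inst_n k i"
    and T_sub: "\<forall>i\<in>{2..k}. T i \<subseteq> M1 i \<and>
                  card (T i) = inst_n k i div 2 - (\<Sum>j\<in>{1..<i}. inst_m k j)"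
    (* costs of group 1 on M_1 *)
    and c_1_1: "\<forall>a\<in>G 1. \<forall>e\<in>Ms 1. c a e = 1"
    (* costs of group j on M_i for j < i *)
    and c_lt1: "\<forall>i\<in>{2..k}. \<forall>j\<in>{1..<i}. \<forall>a\<in>G j. \<forall>e\<in>M1 i. c a e = inst_w k i"
    and c_lt2: "\<forall>i\<in>{2..k}. \<forall>j\<in>{1..<i}. \<forall>a\<in>G j. \<forall>e\<in>M2 i. c a e = inst_w k i / 2"
    (* costs of group i >= 2 on B_i, T_i', M_i^2 *)
    and c_B: "\<forall>i\<in>{2..k}. \<forall>a\<in>G i.
                \<forall>e\<in>(\<Union>j\<in>{1..<i}. Ms j) \<union> T i. c a e = 2 * inst_w k i"
    and c_T': "\<forall>i\<in>{2..k}. \<forall>a\<in>G i. \<forall>e\<in>M1 i - T i. c a e = 0"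
    and c_M2: "\<forall>i\<in>{2..k}. \<forall>a\<in>G i. \<forall>e\<in>M2 i. c a e = inst_w k i"
  shows "\<forall>i\<in>{1..k}. \<forall>a\<in>G i. wmms N M w c a = inst_w k i"
proof (intro ballI)
  fix i a assume i: "i \<in> {1..k}" and a: "a \<in> G i"
  define v where "v = c a"
  have Gd: "\<And>j j'. j \<in> {1..k} \<Longrightarrow> j' \<in> {1..k} \<Longrightarrow> j \<noteq> j' \<Longrightarrow> G j \<inter> G j' = {}"
    using G_disj unfolding disjoint_family_on_def by blast
  have Msd: "\<And>j j'. j \<in> {1..k} \<Longrightarrow> j' \<in> {1..k} \<Longrightarrow> j \<noteq> j' \<Longrightarrow> Ms j \<inter> Ms j' = {}"
    using Ms_disj unfolding disjoint_family_on_def by blast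
  have finG: "\<And>j. j \<in> {1..k} \<Longrightarrow> finite (G j)" using G_card by blast
  have cardG: "\<And>j. j \<in> {1..k} \<Longrightarrow> card (G j) = inst_n k j" using G_card by blast
  have finMs: "\<And>j. j \<in> {1..k} \<Longrightarrow> finite (Ms j)"
  proof -
    fix j assume j: "j \<in> {1..k}"
    show "finite (Ms j)"
    proof (cases "j = 1")
      case True then show ?thesis using Ms1_card by simp
    next
      case False then have "j \<in> {2..k}" using j by auto
      then show ?thesis using Ms_split M1_card M2_card by auto
    qed
  qed
  have finN: "finite N" unfolding N_def using finG by blast
  have finM: "finite M" unfolding M_def using finMs by blast
  have aN: "a \<in> N" unfolding N_def using i a by blast
  have wG: "\<And>j b. j \<in> {1..k} \<Longrightarrow> b \<in> G j \<Longrightarrow> w b = inst_w k j" using w_G by blast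
  have wpos: "\<forall>b\<in>N. w b > 0" unfolding N_def using wG w_pos by fastforce
  have wa: "w a = inst_w k i" using wG i a by blast
  have wsum: "sum w N = (\<Sum>j\<in>{1..k}. real (inst_n k j) * inst_w k j)"
  proof -
    have "sum w N = (\<Sum>j\<in>{1..k}. sum w (G j))"
      unfolding N_def using finG Gd by (intro sum.UNION_disjoint) auto
    also have "\<dots> = (\<Sum>j\<in>{1..k}. real (inst_n k j) * inst_w k j)"
      by (rule sum.cong) (auto simp: wG cardG)
    finally show ?thesis .
  qed
  have i1: "1 \<le> i" "i \<le> k" using i by auto
  have high_cost: "\<And>j. j \<in> {Suc i..k} \<Longrightarrow> sum v (Ms j) = real (inst_n k j) * inst_w k j"
  proof -
    fix j assume j: "j \<in> {Suc i..k}"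
    then have j2: "j \<in> {2..k}" using i1 by auto
    have ij: "i \<in> {1..<j}" using j i1 by auto
    have s: "Ms j = M1 j \<union> M2 j" "M1 j \<inter> M2 j = {}" using Ms_split j2 by auto
    have f: "finite (M1 j)" "finite (M2 j)" "card (M1 j) = inst_n k j div 2" "card (M2 j) = inst_n k j"
      using M1_card M2_card j2 by auto
    have c1: "\<forall>e\<in>M1 j. v e = inst_w k j" using c_lt1 j2 ij a v_def by blast
    have c2: "\<forall>e\<in>M2 j. v e = inst_w k j / 2" using c_lt2 j2 ij a v_def by blast
    have ev: "even (inst_n k j)" using n_even j2 k2 by auto
    have "sum v (Ms j) = sum v (M1 j) + sum v (M2 j)" using s f by (simp add: sum.union_disjoint)
    also have "\<dots> = real (inst_n k j div 2) * inst_w k j + real (inst_n k j) * (inst_w k j / 2)"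
    proof -
      have "sum v (M1 j) = (\<Sum>e\<in>M1 j. inst_w k j)" using c1 by (intro sum.cong) auto
      moreover have "sum v (M2 j) = (\<Sum>e\<in>M2 j. inst_w k j / 2)" using c2 by (intro sum.cong) auto
      ultimately show ?thesis using f by simp
    qed
    also have "\<dots> = real (inst_n k j) * inst_w k j" using ev
      by (simp add: real_of_nat_div)
    finally show "sum v (Ms j) = real (inst_n k j) * inst_w k j" .
  qed
  have vM: "sum v M = (\<Sum>j\<in>{1..k}. sum v (Ms j))"
    unfolding M_def using finMs Msd by (intro sum.UNION_disjoint) auto
  have vsum: "sum v M = sum w N"
  proof -
    have hi: "(\<Sum>j\<in>{Suc i..k}. sum v (Ms j)) = (\<Sum>j\<in>{Suc i..k}. real (inst_n k j) * inst_w k j)"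
      by (rule sum.cong) (auto simp: high_cost)
    have lo: "(\<Sum>j\<in>{1..<i}. sum v (Ms j)) + sum v (Ms i)
           = (\<Sum>j\<in>{1..<i}. real (inst_n k j) * inst_w k j) + real (inst_n k i) * inst_w k i"
    proof (cases "i = 1")
      case True
      have "Ms 1 \<noteq> {}" using Ms1_card by (auto simp: inst_m_def)
      then obtain e where e: "Ms 1 = {e}" using Ms1_card by (metis card_1_singletonE inst_m_def)
      have "v e = 1" using c_1_1 a True e v_def by auto
      then show ?thesis using True e by (simp add: inst_w_def inst_n_def)
    next
      case False
      then have i2: "i \<in> {2..k}" using i1 by auto
      have wi2: "\<forall>e\<in>(\<Union>j\<in>{1..<i}. Ms j) \<union> T i. v e = 2 * inst_w k i" using c_B i2 a v_def by blast
      have "(\<Sum>j\<in>{1..<i}. sum v (Ms j)) = (\<Sum>j\<in>{1..<i}. real (inst_m k j) * (2 * inst_w k i))"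
      proof (rule sum.cong)
        fix j assume j: "j \<in> {1..<i}"
        then have "j \<in> {1..k}" using i1 by auto
        then have "card (Ms j) = inst_m k j"
        proof (cases "j = 1")
          case True then show ?thesis using Ms1_card by simp
        next
          case False
          then have j2: "j \<in> {2..k}" using j i1 by auto
          have s: "Ms j = M1 j \<union> M2 j" "M1 j \<inter> M2 j = {}" using Ms_split j2 by auto
          have f: "finite (M1 j)" "finite (M2 j)" "card (M1 j) = inst_n k j div 2" "card (M2 j) = inst_n k j"
            using M1_card M2_card j2 by auto
          have ev: "even (inst_n k j)" using n_even j2 k2 by auto
          have "card (Ms j) = inst_n k j div 2 + inst_n k j" using s f by (simp add: card_Un_disjoint)
          then show ?thesis using ev False by (simp add: inst_m_def)
        qed
        moreover have "\<forall>e\<in>Ms j. v e = 2 * inst_w k i" using wi2 j by blast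
        ultimately show "sum v (Ms j) = real (inst_m k j) * (2 * inst_w k i)" by simp
      qed simp
      also have "\<dots> = real (\<Sum>j\<in>{1..<i}. inst_m k j) * (2 * inst_w k i)"
        by (simp add: sum_distrib_right)
      finally have A: "(\<Sum>j\<in>{1..<i}. sum v (Ms j)) = real (\<Sum>j\<in>{1..<i}. inst_m k j) * (2 * inst_w k i)" .
      have s: "Ms i = M1 i \<union> M2 i" "M1 i \<inter> M2 i = {}" using Ms_split i2 by auto
      have f: "finite (M1 i)" "finite (M2 i)" "card (M1 i) = inst_n k i div 2" "card (M2 i) = inst_n k i"
        using M1_card M2_card i2 by auto
      have T: "T i \<subseteq> M1 i" "card (T i) = inst_n k i div 2 - (\<Sum>j\<in>{1..<i}. inst_m k j)" using T_sub i2 by auto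
      have fT: "finite (T i)" using T f finite_subset by blast
      have "M1 i = T i \<union> (M1 i - T i)" using T by blast
      then have "Ms i = T i \<union> (M1 i - T i) \<union> M2 i" using s by blast
      moreover have "sum v (T i \<union> (M1 i - T i) \<union> M2 i) = sum v (T i \<union> (M1 i - T i)) + sum v (M2 i)"
        apply (rule sum.union_disjoint) using fT f s(2) T(1) by auto
      moreover have "sum v (T i \<union> (M1 i - T i)) = sum v (T i) + sum v (M1 i - T i)"
        apply (rule sum.union_disjoint) using fT f by auto
      ultimately have "sum v (Ms i) = sum v (T i) + sum v (M1 i - T i) + sum v (M2 i)" by simp
      also have "\<dots> = real (card (T i)) * (2 * inst_w k i) + 0 + real (inst_n k i) * inst_w k i"
        using wi2 c_T' c_M2 i2 a v_def f by simp
      finally have B: "sum v (Ms i) = real (card (T i)) * (2 * inst_w k i) + real (inst_n k i) * inst_w k i" by simp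
      have sm: "(\<Sum>j\<in>{1..<i}. inst_m k j) \<le> inst_n k i div 2" using sum_m k2 i2 by auto
      have "real (\<Sum>j\<in>{1..<i}. inst_m k j) + real (card (T i)) = real (inst_n k i div 2)"
        using T(2) sm by simp
      also have "\<dots> = real (inst_n k i) / 2" using n_even[of k i] k2 i2 by (simp add: real_of_nat_div)
      finally have C: "real (\<Sum>j\<in>{1..<i}. inst_m k j) + real (card (T i)) = real (inst_n k i) / 2" .
      have D: "(\<Sum>j\<in>{1..<i}. real (inst_n k j) * inst_w k j) = real (inst_n k i) * inst_w k i"
        using sum_nw[of i k] nw[of k i] i2 by simp
      show ?thesis unfolding A B D
        using C by (simp add: algebra_simps) (metis distrib_left mult.commute mult_2 nonzero_mult_div_cancel_left zero_neq_numeral times_divide_eq_right)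
    qed
    show ?thesis unfolding vM wsum sum_split3[OF i1] using hi lo by simp
  qed
  have cardMs: "\<And>j. j \<in> {1..k} \<Longrightarrow> card (Ms j) = inst_m k j"
  proof -
    fix j assume j: "j \<in> {1..k}"
    show "card (Ms j) = inst_m k j"
    proof (cases "j = 1")
      case True then show ?thesis using Ms1_card by simp
    next
      case False
      then have j2: "j \<in> {2..k}" using j by auto
      have s: "Ms j = M1 j \<union> M2 j" "M1 j \<inter> M2 j = {}" using Ms_split j2 by auto
      have f: "finite (M1 j)" "finite (M2 j)" "card (M1 j) = inst_n k j div 2" "card (M2 j) = inst_n k j"
        using M1_card M2_card j2 by auto
      have ev: "even (inst_n k j)" using n_even j2 k2 by auto
      have "card (Ms j) = inst_n k j div 2 + inst_n k j" using s f by (simp add: card_Un_disjoint)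
      then show ?thesis using ev False by (simp add: inst_m_def)
    qed
  qed
  have wge: "\<And>j b. j \<in> {1..k} \<Longrightarrow> b \<in> G j \<Longrightarrow> w b \<ge> 0" using wG w_pos by (metis less_imp_le)
  have gh: "\<forall>j\<in>{Suc i..k}. good v w (G j) (Ms j)"
  proof
    fix j assume j: "j \<in> {Suc i..k}"
    then have j2: "j \<in> {2..k}" using i1 by auto
    have j1: "j \<in> {1..k}" using j2 by auto
    have ij: "i \<in> {1..<j}" using j i1 by auto
    have s: "Ms j = M1 j \<union> M2 j" "M1 j \<inter> M2 j = {}" using Ms_split j2 by auto
    have f: "finite (M1 j)" "finite (M2 j)" "card (M1 j) = inst_n k j div 2" "card (M2 j) = inst_n k j"
      using M1_card M2_card j2 by auto
    have c1: "\<forall>e\<in>M1 j. v e = inst_w k j" using c_lt1 j2 ij a v_def by blast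
    have c2: "\<forall>e\<in>M2 j. v e = inst_w k j / 2" using c_lt2 j2 ij a v_def by blast
    have ev: "even (inst_n k j)" using n_even j2 k2 by auto
    have "inst_n k j div 2 \<le> card (G j)" using cardG j1 by simp
    then obtain H where H: "H \<subseteq> G j" "card H = inst_n k j div 2" "finite H"
      using obtain_subset_with_card_n by metis
    have fGj: "finite (G j)" using finG j1 .
    have cH: "card (G j - H) = inst_n k j - inst_n k j div 2"
      using H fGj cardG[OF j1] by (simp add: card_Diff_subset)
    have g1: "good v w H (M1 j)"
      apply (rule good_split[where q = "\<lambda>_. 1"])
      using H f c1 wG[OF j1] wge[OF j1] by auto
    have g2: "good v w (G j - H) (M2 j)"
      apply (rule good_split[where q = "\<lambda>_. 2"])
      using fGj f(2) apply simp_all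
      using cH f(4) ev apply (metis even_two_times_div_two mult.commute mult_2 add_diff_cancel_right')
      using wge[OF j1] apply blast
      using c2 wG[OF j1] by (simp add: mult.commute)
    have "good v w (H \<union> (G j - H)) (M1 j \<union> M2 j)"
      by (rule good_Un[OF g1 g2]) (use s in auto)
    moreover have "H \<union> (G j - H) = G j" using H by auto
    ultimately show "good v w (G j) (Ms j)" using s by simp
  qed
  have gl: "good v w (\<Union>j\<in>{1..i}. G j) (\<Union>j\<in>{1..i}. Ms j)"
  proof (cases "i = 1")
    case True
    have g: "good v w (G 1) (Ms 1)"
      apply (rule good_split[where q = "\<lambda>_. 1"])
      using finG[of 1] Ms1_card cardG[of 1] k2 apply (simp_all add: inst_m_def inst_n_def)
      using wge[of 1] k2 apply simp
      using c_1_1 a True wG[of 1] k2 v_def by (simp add: inst_w_def)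
    show ?thesis using g True by simp
  next
    case False
    then have i2: "i \<in> {2..k}" using i1 by auto
    define B where "B = (\<Union>j\<in>{1..<i}. Ms j) \<union> T i"
    have cB: "\<forall>e\<in>B. v e = 2 * inst_w k i" using c_B i2 a v_def B_def by blast
    have "\<forall>j\<in>{1..<i}. \<exists>q::nat. real q * (2 * inst_w k i) = inst_w k j"
      using quota[OF k2] by auto
    then obtain qq where qq: "\<forall>j\<in>{1..<i}. real (qq j) * (2 * inst_w k i) = inst_w k j"
      by metis
    have s: "Ms i = M1 i \<union> M2 i" "M1 i \<inter> M2 i = {}" using Ms_split i2 by auto
    have f: "finite (M1 i)" "finite (M2 i)" "card (M1 i) = inst_n k i div 2" "card (M2 i) = inst_n k i"
      using M1_card M2_card i2 by auto
    have T: "T i \<subseteq> M1 i" "card (T i) = inst_n k i div 2 - (\<Sum>j\<in>{1..<i}. inst_m k j)" using T_sub i2 by auto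
    have fT: "finite (T i)" using T f finite_subset by blast
    have sub: "\<And>j. j \<in> {1..<i} \<Longrightarrow> j \<in> {1..k}" using i1 by auto
    have dU: "(\<Union>j\<in>{1..<i}. Ms j) \<inter> Ms i = {}" using Msd sub i by fastforce
    have fU: "finite (\<Union>j\<in>{1..<i}. Ms j)" using finMs sub by blast
    have finB: "finite B" unfolding B_def using fU fT by simp
    have cU: "card (\<Union>j\<in>{1..<i}. Ms j) = (\<Sum>j\<in>{1..<i}. inst_m k j)"
    proof -
      have "card (\<Union>j\<in>{1..<i}. Ms j) = (\<Sum>j\<in>{1..<i}. card (Ms j))"
        apply (rule card_UN_disjoint) using finMs sub Msd by auto
      also have "\<dots> = (\<Sum>j\<in>{1..<i}. inst_m k j)" using cardMs sub by simp
      finally show ?thesis .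
    qed
    have sm: "(\<Sum>j\<in>{1..<i}. inst_m k j) \<le> inst_n k i div 2" using sum_m k2 i2 by auto
    have cardB: "card B = inst_n k i div 2"
    proof -
      have "(\<Union>j\<in>{1..<i}. Ms j) \<inter> T i = {}" using dU T(1) s by blast
      then have "card B = card (\<Union>j\<in>{1..<i}. Ms j) + card (T i)"
        unfolding B_def using fU fT by (simp add: card_Un_disjoint)
      then show ?thesis using cU T(2) sm by simp
    qed
    have wipos: "inst_w k i > 0" by (rule w_pos)
    have qqr: "\<And>j. j \<in> {1..<i} \<Longrightarrow> real (qq j) = inst_w k j / (2 * inst_w k i)"
      using qq wipos by (simp add: field_simps)
    have "real (\<Sum>j\<in>{1..<i}. inst_n k j * qq j) = (\<Sum>j\<in>{1..<i}. real (inst_n k j) * inst_w k j) / (2 * inst_w k i)"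
      by (simp add: sum_divide_distrib qqr)
    also have "\<dots> = real (inst_n k i) * inst_w k i / (2 * inst_w k i)"
      using sum_nw[of i k] nw[of k i] i2 by simp
    also have "\<dots> = real (inst_n k i) / 2" using wipos by simp
    also have "\<dots> = real (inst_n k i div 2)" using n_even[of k i] k2 i2 by (simp add: real_of_nat_div)
    finally have "(\<Sum>j\<in>{1..<i}. inst_n k j * qq j) = inst_n k i div 2" by linarith
    then have cB2: "card B = (\<Sum>j\<in>{1..<i}. inst_n k j * qq j)" using cardB by simp
    obtain P where P: "\<forall>j\<in>{1..<i}. P j \<subseteq> B \<and> card (P j) = inst_n k j * qq j"
      "\<forall>j\<in>{1..<i}. \<forall>j'\<in>{1..<i}. j \<noteq> j' \<longrightarrow> P j \<inter> P j' = {}" "(\<Union>j\<in>{1..<i}. P j) = B"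
      using part_card[OF finite_atLeastLessThan finB cB2] by blast
    have gP: "\<forall>j\<in>{1..<i}. good v w (G j) (P j)"
    proof
      fix j assume j: "j \<in> {1..<i}"
      have j1: "j \<in> {1..k}" using sub j .
      have Pj: "P j \<subseteq> B" "card (P j) = inst_n k j * qq j" using P(1) j by auto
      have fPj: "finite (P j)" using Pj(1) finB by (rule finite_subset)
      have cPj: "card (P j) = (\<Sum>b\<in>G j. qq j)" using Pj(2) cardG[OF j1] by simp
      show "good v w (G j) (P j)"
        apply (rule good_split[where q = "\<lambda>_. qq j", OF finG[OF j1] fPj cPj])
        using wge[OF j1] apply blast
      proof (intro ballI)
        fix b e assume b: "b \<in> G j" and e: "e \<in> P j"
        have "e \<in> B" using Pj(1) e by blast
        then have "v e = 2 * inst_w k i" using cB by blast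
        then show "real (qq j) * v e \<le> w b" using qq j wG[OF j1 b] by simp
      qed
    qed
    have g0: "good v w (\<Union>j\<in>{1..<i}. G j) B"
    proof -
      have d1: "disjoint_family_on G {1..<i}"
        using G_disj sub unfolding disjoint_family_on_def by blast
      have d2: "disjoint_family_on P {1..<i}" using P(2) unfolding disjoint_family_on_def by blast
      show ?thesis using good_UN[OF _ d1 d2 gP] P(3) by simp
    qed
    have g1: "good v w (G i) (M2 i)"
      apply (rule good_split[where q = "\<lambda>_. 1"])
      using finG i f cardG i apply simp_all
      using wge i apply blast
      using c_M2 i2 a v_def wG[OF i] by simp
    have dG: "(\<Union>j\<in>{1..<i}. G j) \<inter> G i = {}" using Gd sub i by fastforce
    have dBM: "B \<inter> M2 i = {}" unfolding B_def using dU s T(1) by blast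
    have g01: "good v w ((\<Union>j\<in>{1..<i}. G j) \<union> G i) (B \<union> M2 i)"
      by (rule good_Un[OF g0 g1 dG dBM])
    have g2: "good v w ((\<Union>j\<in>{1..<i}. G j) \<union> G i) (B \<union> M2 i \<union> (M1 i - T i))"
      apply (rule good_zero[OF g01, where a = a and Y = "M1 i - T i"])
      using finB f apply simp
      using a apply simp
      using f apply simp
      using dU s T(1) unfolding B_def apply blast
      using c_T' i2 a v_def by blast
    have I: "{1..i} = insert i {1..<i}" using i1 by auto
    have e1: "(\<Union>j\<in>{1..<i}. G j) \<union> G i = (\<Union>j\<in>{1..i}. G j)"
      unfolding I by auto
    have e2: "B \<union> M2 i \<union> (M1 i - T i) = (\<Union>j\<in>{1..i}. Ms j)"
    proof -
      have h: "(\<Union>j\<in>{1..i}. Ms j) = (\<Union>j\<in>{1..<i}. Ms j) \<union> Ms i"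
        unfolding I by auto
      show ?thesis unfolding B_def h s(1) using T(1) by auto
    qed
    show ?thesis using g2 unfolding e1 e2 .
  qed
  have gall: "good v w (\<Union>t\<in>{i..k}. if t = i then \<Union>j\<in>{1..i}. G j else G t)
                        (\<Union>t\<in>{i..k}. if t = i then \<Union>j\<in>{1..i}. Ms j else Ms t)"
    apply (rule good_UN)
       apply simp
      apply (rule disj_piece[OF G_disj i1(1)])
     apply (rule disj_piece[OF Ms_disj i1(1)])
    using gl gh by (simp split: if_split)
  have good: "good v w N M"
    using gall unfolding N_def M_def cover_piece[OF i1] .
  show "wmms N M w c a = inst_w k i"
  proof -
    have "wmms N M w c a = w a"
      apply (rule wmms_eq[OF finN finM aN wpos])
      using good vsum v_def by simp_all
    then show ?thesis using wa by simp
  qed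
qed

end
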